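(* The center of the group $QI(\mathbb{R})$ of quasi-isometries of the real line is trivial.
   Context: A map $f:\mathbb{R}\to\mathbb{R}$ is a quasi-isometry if there is $K>1$ such that $\frac{1}{K}|x_1-x_2|-K\le |f(x_1)-f(x_2)|\le K|x_1-x_2|+K$ for all $x_1,x_2\in\mathbb{R}$, and every $y\in\mathbb{R}$ is within distance $K$ of some $f(x)$. Two quasi-isometries $f,g$ are equivalent if $\sup_{x\in\mathbb{R}}|f(x)-g(x)|<\infty$. $QI(\mathbb{R})$ is the set of equivalence classes $[f]$ of quasi-isometries $\mathbb{R}\to\mathbb{R}$, a group under $[f]\cdot[g]=[f\circ g]$. *)

theory Defs
  imports Complex_Main "HOL-Algebra.Group"
begin

definition quasi_isometry :: "(real \<Rightarrow> real) \<Rightarrow> bool" where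
  "quasi_isometry f \<longleftrightarrow> (\<exists>K>1.
      (\<forall>x1 x2. \<bar>x1 - x2\<bar> / K - K \<le> \<bar>f x1 - f x2\<bar> \<and> \<bar>f x1 - f x2\<bar> \<le> K * \<bar>x1 - x2\<bar> + K)
    \<and> (\<forall>y. \<exists>x. \<bar>y - f x\<bar> \<le> K))"

definition qi_equiv :: "(real \<Rightarrow> real) \<Rightarrow> (real \<Rightarrow> real) \<Rightarrow> bool" where
  "qi_equiv f g \<longleftrightarrow> bdd_above (range (\<lambda>x. \<bar>f x - g x\<bar>))"

definition qi_class :: "(real \<Rightarrow> real) \<Rightarrow> (real \<Rightarrow> real) set" where
  "qi_class f = {g. quasi_isometry g \<and> qi_equiv g f}"

text \<open>The group QI(R): classes of quasi-isometries, with [f][g] = [f o g].\<close>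
definition QI_group :: "(real \<Rightarrow> real) set monoid" where
  "QI_group = \<lparr> carrier = {qi_class f | f. quasi_isometry f},
      mult = (\<lambda>A B. {h. quasi_isometry h \<and> (\<exists>f\<in>A. \<exists>g\<in>B. qi_equiv h (f \<circ> g))}),
      one = qi_class id \<rparr>"

definition center :: "('a, 'b) monoid_scheme \<Rightarrow> 'a set" where
  "center G = {z \<in> carrier G. \<forall>x\<in>carrier G. z \<otimes>\<^bsub>G\<^esub> x = x \<otimes>\<^bsub>G\<^esub> z}"

end

theory Submission
  imports Defs "HOL-Analysis.Analysis"
begin

lemma qi_equiv_iff: "qi_equiv f g \<longleftrightarrow> (\<exists>C. \<forall>x. \<bar>f x - g x\<bar> \<le> C)"
  by (auto simp: qi_equiv_def bdd_above_def)

lemma qi_equiv_refl: "qi_equiv f f"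
  by (auto simp: qi_equiv_iff)

lemma qi_equiv_sym: "qi_equiv f g \<Longrightarrow> qi_equiv g f"
  by (auto simp: qi_equiv_iff abs_minus_commute)

lemma qi_equiv_trans: "qi_equiv f g \<Longrightarrow> qi_equiv g h \<Longrightarrow> qi_equiv f h"
proof -
  assume "qi_equiv f g" "qi_equiv g h"
  then obtain C D where C: "\<forall>x. \<bar>f x - g x\<bar> \<le> C" and D: "\<forall>x. \<bar>g x - h x\<bar> \<le> D"
    by (auto simp: qi_equiv_iff)
  have "\<bar>f x - h x\<bar> \<le> C + D" for x
    using C[rule_format, of x] D[rule_format, of x] by linarith
  then show ?thesis by (auto simp: qi_equiv_iff)
qed

lemma qi_id: "quasi_isometry id"
  unfolding quasi_isometry_def
proof (rule exI[of _ 2], intro conjI allI)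
  fix x1 x2 :: real
  show "\<bar>x1 - x2\<bar> / 2 - 2 \<le> \<bar>id x1 - id x2\<bar>" proof - have "\<And>t::real. \<bar>t\<bar> / 2 - 2 \<le> \<bar>t\<bar>" by linarith then show ?thesis by simp qed
  show "\<bar>id x1 - id x2\<bar> \<le> 2 * \<bar>x1 - x2\<bar> + 2" by simp
next
  fix y :: real
  show "\<exists>x. \<bar>y - id x\<bar> \<le> 2" by (rule exI[of _ y]) simp
qed simp

lemma qi_comp:
  assumes "quasi_isometry f" "quasi_isometry g"
  shows "quasi_isometry (f \<circ> g)"
proof -
  obtain K where K: "K > 1"
    "\<And>x1 x2. \<bar>x1 - x2\<bar> / K - K \<le> \<bar>f x1 - f x2\<bar>"
    "\<And>x1 x2. \<bar>f x1 - f x2\<bar> \<le> K * \<bar>x1 - x2\<bar> + K"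
    "\<And>y. \<exists>x. \<bar>y - f x\<bar> \<le> K"
    using assms(1) unfolding quasi_isometry_def by blast
  obtain L where L: "L > 1"
    "\<And>x1 x2. \<bar>x1 - x2\<bar> / L - L \<le> \<bar>g x1 - g x2\<bar>"
    "\<And>x1 x2. \<bar>g x1 - g x2\<bar> \<le> L * \<bar>x1 - x2\<bar> + L"
    "\<And>y. \<exists>x. \<bar>y - g x\<bar> \<le> L"
    using assms(2) unfolding quasi_isometry_def by blast
  define M where "M = 2*K*L + 2*K + 2*L"
  have KL: "K * L > 1" using K(1) L(1) by (metis less_1_mult)
  have M1: "M > 1" using K(1) L(1) KL by (simp add: M_def)
  have MKL: "K * L \<le> M" using K(1) L(1) KL by (simp add: M_def)
  have lower: "\<bar>a - b\<bar> / M - M \<le> \<bar>f (g a) - f (g b)\<bar>" for a b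
  proof -
    have "(\<bar>a - b\<bar> / L - L) / K \<le> \<bar>g a - g b\<bar> / K"
      using L(2)[of a b] K(1) by (simp add: divide_right_mono)
    also have "\<dots> - K \<le> \<bar>f (g a) - f (g b)\<bar>" using K(2) .
    finally have 1: "(\<bar>a - b\<bar> / L - L) / K - K \<le> \<bar>f (g a) - f (g b)\<bar>" by simp
    have 2: "(\<bar>a - b\<bar> / L - L) / K = \<bar>a - b\<bar> / (K*L) - L / K"
      using K(1) L(1) by (simp add: field_simps)
    have 3: "\<bar>a - b\<bar> / M \<le> \<bar>a - b\<bar> / (K*L)"
      using MKL KL by (simp add: frac_le)
    have 4: "L / K \<le> L" using K(1) L(1) by (simp add: divide_le_eq)
    have 5: "L + K \<le> M" using K(1) L(1) KL by (simp add: M_def)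
    show ?thesis using 1 2 3 4 5 by linarith
  qed
  have upper: "\<bar>f (g a) - f (g b)\<bar> \<le> M * \<bar>a - b\<bar> + M" for a b
  proof -
    have "\<bar>f (g a) - f (g b)\<bar> \<le> K * \<bar>g a - g b\<bar> + K" by (rule K(3))
    also have "\<dots> \<le> K * (L * \<bar>a - b\<bar> + L) + K"
      using L(3)[of a b] K(1) by simp
    also have "\<dots> = (K*L) * \<bar>a - b\<bar> + (K*L + K)" by (simp add: algebra_simps)
    also have "\<dots> \<le> M * \<bar>a - b\<bar> + M"
      apply (rule add_mono)
       apply (rule mult_right_mono) using MKL apply simp_all
      using K(1) L(1) KL by (simp add: M_def)
    finally show ?thesis .
  qed
  have surj: "\<exists>x. \<bar>y - f (g x)\<bar> \<le> M" for y
  proof -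
    obtain a where a: "\<bar>y - f a\<bar> \<le> K" using K(4) by blast
    obtain x where x: "\<bar>a - g x\<bar> \<le> L" using L(4) by blast
    have "\<bar>f a - f (g x)\<bar> \<le> K * L + K"
      using K(3)[of a "g x"] x K(1) mult_left_mono[OF x, of K] by linarith
    then have "\<bar>y - f (g x)\<bar> \<le> K*L + 2*K" using a by linarith
    also have "\<dots> \<le> M" using K(1) L(1) KL by (simp add: M_def)
    finally show ?thesis by blast
  qed
  show ?thesis unfolding quasi_isometry_def
    using M1 lower upper surj by (intro exI[of _ M]) auto
qed


lemma comp_equiv:
  assumes "quasi_isometry f" "qi_equiv f' f" "qi_equiv g' g"
  shows "qi_equiv (f' \<circ> g') (f \<circ> g)"
proof -
  obtain K where K: "K > 1" "\<And>x1 x2. \<bar>f x1 - f x2\<bar> \<le> K * \<bar>x1 - x2\<bar> + K"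
    using assms(1) unfolding quasi_isometry_def by blast
  obtain C where C: "\<And>x. \<bar>f' x - f x\<bar> \<le> C" using assms(2) by (auto simp: qi_equiv_iff)
  obtain D where D: "\<And>x. \<bar>g' x - g x\<bar> \<le> D" using assms(3) by (auto simp: qi_equiv_iff)
  have "\<bar>f' (g' x) - f (g x)\<bar> \<le> C + (K * D + K)" for x
  proof -
    have "\<bar>f (g' x) - f (g x)\<bar> \<le> K * \<bar>g' x - g x\<bar> + K" by (rule K(2))
    also have "\<dots> \<le> K * D + K" using D[of x] K(1) by simp
    finally show ?thesis using C[of "g' x"] by linarith
  qed
  then show ?thesis by (auto simp: qi_equiv_iff)
qed

lemma carrier_QI: "carrier QI_group = {qi_class f | f. quasi_isometry f}"
  by (simp add: QI_group_def)

lemma one_QI: "\<one>\<^bsub>QI_group\<^esub> = qi_class id"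
  by (simp add: QI_group_def)

lemma mult_class:
  assumes "quasi_isometry f" "quasi_isometry g"
  shows "qi_class f \<otimes>\<^bsub>QI_group\<^esub> qi_class g = qi_class (f \<circ> g)"
proof -
  have "qi_class f \<otimes>\<^bsub>QI_group\<^esub> qi_class g =
     {h. quasi_isometry h \<and> (\<exists>f'\<in>qi_class f. \<exists>g'\<in>qi_class g. qi_equiv h (f' \<circ> g'))}"
    by (simp add: QI_group_def)
  also have "\<dots> = qi_class (f \<circ> g)"
  proof (intro equalityI subsetI)
    fix h assume "h \<in> {h. quasi_isometry h \<and> (\<exists>f'\<in>qi_class f. \<exists>g'\<in>qi_class g. qi_equiv h (f' \<circ> g'))}"
    then obtain f' g' where h: "quasi_isometry h" "qi_equiv h (f' \<circ> g')" "qi_equiv f' f" "qi_equiv g' g"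
      by (auto simp: qi_class_def)
    then show "h \<in> qi_class (f \<circ> g)"
      using comp_equiv[OF assms(1) h(3,4)] qi_equiv_trans unfolding qi_class_def by blast
  next
    fix h assume "h \<in> qi_class (f \<circ> g)"
    then show "h \<in> {h. quasi_isometry h \<and> (\<exists>f'\<in>qi_class f. \<exists>g'\<in>qi_class g. qi_equiv h (f' \<circ> g'))}"
      using assms qi_equiv_refl unfolding qi_class_def by blast
  qed
  finally show ?thesis .
qed

lemma class_eq: "qi_equiv f g \<Longrightarrow> qi_class f = qi_class g"
  unfolding qi_class_def using qi_equiv_trans qi_equiv_sym by blast

lemma aux1: "\<bar>v\<bar> \<le> \<bar>u::real\<bar> \<Longrightarrow> \<bar>u\<bar> / 2 - 2 \<le> \<bar>u + v / 2\<bar>"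
  by (smt (verit) abs_ge_zero field_sum_of_halves)
lemma aux2: "\<bar>v\<bar> \<le> \<bar>u::real\<bar> \<Longrightarrow> \<bar>u + v / 2\<bar> \<le> 2 * \<bar>u\<bar> + 2"
  by (smt (verit) abs_ge_zero field_sum_of_halves)

lemma qi_infdist:
  fixes A :: "real set"
  assumes "A \<noteq> {}"
  shows "quasi_isometry (\<lambda>x. x + infdist x A / 2)"
  unfolding quasi_isometry_def
proof (rule exI[of _ 2], intro conjI allI)
  fix x1 x2 :: real
  have t: "\<bar>infdist x1 A - infdist x2 A\<bar> \<le> \<bar>x1 - x2\<bar>"
    using infdist_triangle_abs[of x1 A x2] by (simp add: dist_real_def)
  have e: "x1 + infdist x1 A / 2 - (x2 + infdist x2 A / 2) = (x1 - x2) + (infdist x1 A - infdist x2 A) / 2"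
    by (simp add: field_simps)
  show "\<bar>x1 - x2\<bar> / 2 - 2 \<le> \<bar>x1 + infdist x1 A / 2 - (x2 + infdist x2 A / 2)\<bar>"
    unfolding e by (rule aux1[OF t])
  show "\<bar>x1 + infdist x1 A / 2 - (x2 + infdist x2 A / 2)\<bar> \<le> 2 * \<bar>x1 - x2\<bar> + 2"
    unfolding e by (rule aux2[OF t])
next
  fix y :: real
  let ?g = "\<lambda>x. x + infdist x A / 2"
  define D where "D = infdist y A"
  have D0: "D \<ge> 0" using infdist_nonneg D_def by simp
  have "infdist (y - D) A \<le> infdist y A + dist (y - D) y" by (rule infdist_triangle)
  then have "?g (y - D) \<le> y" using D0 by (simp add: D_def dist_real_def)
  moreover have "y \<le> ?g y" using infdist_nonneg[of y A] by simp
  moreover have "continuous_on {y - D .. y} ?g"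
    by (intro continuous_intros) auto
  ultimately obtain x where "?g x = y"
    using IVT'[of ?g "y - D" y y] D0 by auto
  then show "\<exists>x. \<bar>y - ?g x\<bar> \<le> 2" by (intro exI[of _ x]) simp
qed simp


lemma central_commute:
  assumes f: "quasi_isometry f"
    and cen: "\<And>g. quasi_isometry g \<Longrightarrow> qi_class (f \<circ> g) = qi_class (g \<circ> f)"
    and g: "quasi_isometry g"
  shows "\<exists>C. \<forall>x. \<bar>f (g x) - g (f x)\<bar> \<le> C"
proof -
  have "f \<circ> g \<in> qi_class (f \<circ> g)"
    using qi_comp[OF f g] qi_equiv_refl by (auto simp: qi_class_def)
  then have "f \<circ> g \<in> qi_class (g \<circ> f)" using cen[OF g] by simp
  then have "qi_equiv (f \<circ> g) (g \<circ> f)" by (simp add: qi_class_def)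
  then show ?thesis by (simp add: qi_equiv_iff)
qed

lemma central_infdist:
  fixes A :: "real set"
  assumes f: "quasi_isometry f"
    and cen: "\<And>g. quasi_isometry g \<Longrightarrow> qi_class (f \<circ> g) = qi_class (g \<circ> f)"
    and A: "A \<noteq> {}"
  shows "\<exists>C. \<forall>a\<in>A. infdist (f a) A \<le> C"
proof -
  obtain C where C: "\<And>x. \<bar>f (x + infdist x A / 2) - (f x + infdist (f x) A / 2)\<bar> \<le> C"
    using central_commute[OF f cen qi_infdist[OF A]] by auto
  have "infdist (f a) A \<le> 2 * C" if "a \<in> A" for a
    using C[of a] that infdist_nonneg[of "f a" A] by simp
  then show ?thesis by blast
qed

lemma central_equiv_id:
  assumes f: "quasi_isometry f"
    and cen: "\<And>g. quasi_isometry g \<Longrightarrow> qi_class (f \<circ> g) = qi_class (g \<circ> f)"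
  shows "qi_equiv f id"
proof (rule ccontr)
  assume nb: "\<not> qi_equiv f id"
  obtain K where K: "K > 1"
    "\<And>x1 x2. \<bar>x1 - x2\<bar> / K - K \<le> \<bar>f x1 - f x2\<bar>"
    "\<And>x1 x2. \<bar>f x1 - f x2\<bar> \<le> K * \<bar>x1 - x2\<bar> + K"
    using f unfolding quasi_isometry_def by blast
  define c where "c = \<bar>f 0\<bar>"
  have c0: "c \<ge> 0" by (simp add: c_def)
  have fup: "\<bar>f x\<bar> \<le> K * \<bar>x\<bar> + K + c" for x
    using K(3)[of x 0] by (simp add: c_def)
  have flo: "\<bar>f x\<bar> \<ge> \<bar>x\<bar> / K - K - c" for x
    using K(2)[of x 0] by (simp add: c_def)
  have unb: "\<exists>x. \<bar>f x - x\<bar> > M" for M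
    using nb by (force simp: qi_equiv_iff not_le)
  have big: "\<exists>y. \<bar>f y - y\<bar> \<ge> n \<and> \<bar>y\<bar> \<ge> R" for n :: real and R :: real
  proof -
    obtain y where y: "\<bar>f y - y\<bar> > \<bar>n\<bar> + (K + 1) * \<bar>R\<bar> + K + c" using unb by blast
    have "\<bar>f y - y\<bar> \<le> \<bar>f y\<bar> + \<bar>y\<bar>" by linarith
    also have "\<dots> \<le> (K + 1) * \<bar>y\<bar> + K + c" using fup[of y] by (simp add: algebra_simps)
    finally have 1: "\<bar>f y - y\<bar> \<le> (K + 1) * \<bar>y\<bar> + K + c" .
    have "\<bar>y\<bar> \<ge> R"
    proof (rule ccontr)
      assume "\<not> \<bar>y\<bar> \<ge> R"
      then have "\<bar>y\<bar> \<le> \<bar>R\<bar>" by linarith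
      then have "(K + 1) * \<bar>y\<bar> \<le> (K + 1) * \<bar>R\<bar>" using K(1) by simp
      then show False using 1 y abs_ge_zero[of n] by linarith
    qed
    moreover have "\<bar>f y - y\<bar> \<ge> n" using y 1 abs_ge_self[of n] K(1) c0
      by (smt (verit) abs_ge_zero mult_nonneg_nonneg)
    ultimately show ?thesis by blast
  qed
  define P where "P = (\<lambda>n::nat. \<lambda>x::real. \<bar>f x - x\<bar> \<ge> real n)"
  define Q where "Q = (\<lambda>n::nat. \<lambda>x::real. \<lambda>y::real. \<bar>y\<bar> \<ge> K * (\<bar>x\<bar> + K + c + real n + 1))"
  have "\<exists>s. \<forall>n. P n (s n) \<and> Q n (s n) (s (Suc n))"
  proof (rule dependent_nat_choice)
    show "\<exists>x. P 0 x" by (auto simp: P_def)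
  next
    fix x n assume "P n x"
    obtain y where "\<bar>f y - y\<bar> \<ge> real (Suc n)" "\<bar>y\<bar> \<ge> K * (\<bar>x\<bar> + K + c + real n + 1)"
      using big by blast
    then show "\<exists>y. P (Suc n) y \<and> Q n x y" by (auto simp: P_def Q_def)
  qed
  then obtain s where sP: "\<And>n. \<bar>f (s n) - s n\<bar> \<ge> real n"
    and sQ: "\<And>n. \<bar>s (Suc n)\<bar> \<ge> K * (\<bar>s n\<bar> + K + c + real n + 1)"
    by (auto simp: P_def Q_def)
  have sQ': "\<bar>s (Suc n)\<bar> \<ge> K * \<bar>s n\<bar> + K + c + real n + 1" for n
  proof -
    have "K * (\<bar>s n\<bar> + K + c + real n + 1) = K * \<bar>s n\<bar> + K * (K + c + real n + 1)"
      by (simp add: algebra_simps)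
    moreover have "K * (K + c + real n + 1) \<ge> 1 * (K + c + real n + 1)"
      using K(1) c0 by (intro mult_right_mono) auto
    ultimately show ?thesis using sQ[of n] by (smt (verit) mult_1)
  qed
  have smono: "\<bar>s n\<bar> \<le> \<bar>s (Suc n)\<bar>" for n
  proof -
    have "\<bar>s n\<bar> \<le> K * \<bar>s n\<bar>" using K(1) by (simp add: mult_le_cancel_right1)
    then show ?thesis using sQ'[of n] c0 K(1) by linarith
  qed
  have far: "\<bar>f (s n) - s m\<bar> \<ge> real n" for n m
  proof (cases rule: linorder_cases[of m n])
    case equal then show ?thesis using sP[of n] by simp
  next
    case greater
    then have "\<bar>s (Suc n)\<bar> \<le> \<bar>s m\<bar>" using lift_Suc_mono_le[of "\<lambda>k. \<bar>s k\<bar>", OF smono] by simp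
    then have "\<bar>s m\<bar> \<ge> K * \<bar>s n\<bar> + K + c + real n + 1" using sQ'[of n] by linarith
    then show ?thesis using fup[of "s n"] by linarith
  next
    case less
    then obtain p where p: "n = Suc p" "m \<le> p" by (cases n) auto
    have "\<bar>s m\<bar> \<le> \<bar>s p\<bar>" using lift_Suc_mono_le[of "\<lambda>k. \<bar>s k\<bar>", OF smono p(2)] .
    then have "\<bar>s n\<bar> \<ge> K * (\<bar>s m\<bar> + K + c + real n)"
      using sQ[of p] p(1) K(1) by (smt (verit) of_nat_Suc mult_left_mono)
    then have "\<bar>s n\<bar> / K \<ge> \<bar>s m\<bar> + K + c + real n"
      using K(1) by (simp add: le_divide_eq mult.commute)
    then show ?thesis using flo[of "s n"] by linarith
  qed
  have "range s \<noteq> {}" by simp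
  from central_infdist[OF f cen this] obtain C where C: "\<And>a. a \<in> range s \<Longrightarrow> infdist (f a) (range s) \<le> C"
    by blast
  obtain n :: nat where n: "real n > C" using reals_Archimedean2 by blast
  have "infdist (f (s n)) (range s) = (INF a\<in>range s. dist (f (s n)) a)"
    by (rule infdist_notempty) simp
  also have "\<dots> \<ge> real n"
    by (rule cINF_greatest) (auto simp: dist_real_def far)
  finally have "infdist (f (s n)) (range s) \<ge> real n" .
  with C[of "s n"] n show False by simp
qed

theorem theorem1:
  shows "center QI_group = {\<one>\<^bsub>QI_group\<^esub>}"
proof (intro equalityI subsetI)
    fix z assume z: "z \<in> center QI_group"
    then obtain f where zf: "z = qi_class f" and f: "quasi_isometry f"
      by (auto simp: center_def carrier_QI)
    have cen: "qi_class (f \<circ> g) = qi_class (g \<circ> f)" if g: "quasi_isometry g" for g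
    proof -
      have "qi_class g \<in> carrier QI_group" using g by (auto simp: carrier_QI)
      then have "z \<otimes>\<^bsub>QI_group\<^esub> qi_class g = qi_class g \<otimes>\<^bsub>QI_group\<^esub> z"
        using z by (auto simp: center_def)
      then show ?thesis using mult_class[OF f g] mult_class[OF g f] zf by simp
    qed
    have "qi_equiv f id" by (rule central_equiv_id[OF f cen])
    then show "z \<in> {\<one>\<^bsub>QI_group\<^esub>}" using class_eq zf one_QI by simp
  next
    fix z assume "z \<in> {\<one>\<^bsub>QI_group\<^esub>}"
    then have z: "z = qi_class id" by (simp add: one_QI)
    have "z \<in> carrier QI_group" using z qi_id by (auto simp: carrier_QI)
    moreover have "z \<otimes>\<^bsub>QI_group\<^esub> x = x \<otimes>\<^bsub>QI_group\<^esub> z" if xc: "x \<in> carrier QI_group" for x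
    proof -
      obtain f where x: "x = qi_class f" and f: "quasi_isometry f" using xc by (auto simp: carrier_QI)
      show ?thesis using mult_class[OF qi_id f] mult_class[OF f qi_id] x z by simp
    qed
    ultimately show "z \<in> center QI_group" by (simp add: center_def)
qed

end
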